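(* Let $A\in H_n$ and $B\in H_m$ have eigenvalues $a_1,\dots,a_n$ and $b_1,\dots,b_m$, respectively, and set $\mathbf a=(a_1,\dots,a_n)$, $\mathbf b=(b_1,\dots,b_m)$. The following are equivalent: (a) there is a completely positive map $\Phi:M_n\to M_m$ with $\Phi(A)=B$; (b) there is an $n\times m$ nonnegative matrix $D$ with $\mathbf b=\mathbf aD$; (c) there are real numbers $\gamma_1,\gamma_2\ge0$ such that $\gamma_2\min_i a_i\le b_j\le\gamma_1\max_i a_i$ for all $1\le j\le m$. Likewise, the following are equivalent: (a') there is a unital completely positive map $\Phi:M_n\to M_m$ with $\Phi(A)=B$; (b') there is an $n\times m$ column stochastic matrix $D$ with $\mathbf b=\mathbf aD$; (c') $\min_i a_i\le b_j\le\max_i a_i$ for all $1\le j\le m$.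
   Context: $H_n$ is the set of $n\times n$ Hermitian matrices. A linear map is completely positive if all its ampliations $I_k\otimes\Phi$ preserve positive semidefiniteness; unital means $\Phi(I_n)=I_m$. A column stochastic matrix is a nonnegative matrix each of whose columns sums to 1. *)

theory Defs
  imports "Jordan_Normal_Form.Char_Poly"
begin

definition hermitian_mat :: "nat \<Rightarrow> complex mat \<Rightarrow> bool" where
  "hermitian_mat n A \<longleftrightarrow> A \<in> carrier_mat n n \<and>
     (\<forall>i<n. \<forall>j<n. A $$ (i, j) = cnj (A $$ (j, i)))"

definition psd_mat :: "nat \<Rightarrow> complex mat \<Rightarrow> bool" where
  "psd_mat d X \<longleftrightarrow> X \<in> carrier_mat d d \<and>
     (\<forall>v \<in> carrier_vec d.
        let q = (\<Sum>i<d. \<Sum>j<d. cnj (v $ i) * X $$ (i, j) * v $ j) in Im q = 0 \<and> Re q \<ge> 0)"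

definition linear_map_mat :: "nat \<Rightarrow> nat \<Rightarrow> (complex mat \<Rightarrow> complex mat) \<Rightarrow> bool" where
  "linear_map_mat n m \<Phi> \<longleftrightarrow>
     (\<forall>X \<in> carrier_mat n n. \<Phi> X \<in> carrier_mat m m) \<and>
     (\<forall>X \<in> carrier_mat n n. \<forall>Y \<in> carrier_mat n n. \<Phi> (X + Y) = \<Phi> X + \<Phi> Y) \<and>
     (\<forall>c. \<forall>X \<in> carrier_mat n n. \<Phi> (c \<cdot>\<^sub>m X) = c \<cdot>\<^sub>m \<Phi> X)"

text \<open>Ampliation I_k \<otimes> Phi : M_k(M_n) \<rightarrow> M_k(M_m): a (k n) x (k n) matrix X is viewed as a
  k x k block matrix with n x n blocks X_pq (entry (p*n+r, q*n+s)), and Phi is applied blockwise.\<close>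
definition ampliation :: "nat \<Rightarrow> nat \<Rightarrow> nat \<Rightarrow> (complex mat \<Rightarrow> complex mat) \<Rightarrow> complex mat \<Rightarrow> complex mat" where
  "ampliation k n m \<Phi> X = mat (k * m) (k * m) (\<lambda>(i, j).
     \<Phi> (mat n n (\<lambda>(r, s). X $$ ((i div m) * n + r, (j div m) * n + s))) $$ (i mod m, j mod m))"

definition completely_positive :: "nat \<Rightarrow> nat \<Rightarrow> (complex mat \<Rightarrow> complex mat) \<Rightarrow> bool" where
  "completely_positive n m \<Phi> \<longleftrightarrow> linear_map_mat n m \<Phi> \<and>
     (\<forall>k. \<forall>X. psd_mat (k * n) X \<longrightarrow> psd_mat (k * m) (ampliation k n m \<Phi> X))"

definition unital :: "nat \<Rightarrow> nat \<Rightarrow> (complex mat \<Rightarrow> complex mat) \<Rightarrow> bool" where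
  "unital n m \<Phi> \<longleftrightarrow> \<Phi> (1\<^sub>m n) = 1\<^sub>m m"

definition eigenvalues_are :: "nat \<Rightarrow> complex mat \<Rightarrow> (nat \<Rightarrow> real) \<Rightarrow> bool" where
  "eigenvalues_are n A a \<longleftrightarrow> char_poly A = (\<Prod>i<n. [:- complex_of_real (a i), 1:])"

definition nonneg_mat :: "nat \<Rightarrow> nat \<Rightarrow> real mat \<Rightarrow> bool" where
  "nonneg_mat n m D \<longleftrightarrow> D \<in> carrier_mat n m \<and> (\<forall>i<n. \<forall>j<m. D $$ (i, j) \<ge> 0)"

definition column_stochastic :: "nat \<Rightarrow> nat \<Rightarrow> real mat \<Rightarrow> bool" where
  "column_stochastic n m D \<longleftrightarrow> nonneg_mat n m D \<and> (\<forall>j<m. (\<Sum>i<n. D $$ (i, j)) = 1)"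

definition row_times :: "nat \<Rightarrow> nat \<Rightarrow> (nat \<Rightarrow> real) \<Rightarrow> real mat \<Rightarrow> (nat \<Rightarrow> real) \<Rightarrow> bool" where
  "row_times n m a D b \<longleftrightarrow> (\<forall>j<m. b j = (\<Sum>i<n. a i * D $$ (i, j)))"

end

theory Submission
  imports Defs "Jordan_Normal_Form.Schur_Decomposition" "Jordan_Normal_Form.Spectral_Radius"
begin

definition adj :: "complex mat \<Rightarrow> complex mat" where
  "adj M = mat (dim_col M) (dim_row M) (\<lambda>(i,j). cnj (M $$ (j,i)))"

lemma adj_dims[simp]: "dim_row (adj M) = dim_col M" "dim_col (adj M) = dim_row M"
  by (auto simp: adj_def)

lemma adj_carrier[simp]: "M \<in> carrier_mat n k \<Longrightarrow> adj M \<in> carrier_mat k n"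
  by (auto simp: adj_def)

lemma adj_index[simp]: "i < dim_col M \<Longrightarrow> j < dim_row M \<Longrightarrow> adj M $$ (i,j) = cnj (M $$ (j,i))"
  by (auto simp: adj_def)

lemma adj_adj[simp]: "adj (adj M) = M"
  by (rule eq_matI, auto)

lemma adj_mult: assumes "A \<in> carrier_mat n k" "B \<in> carrier_mat k l"
  shows "adj (A * B) = adj B * adj A"
proof (rule eq_matI)
  fix i j assume i: "i < dim_row (adj B * adj A)" and j: "j < dim_col (adj B * adj A)"
  then have i: "i < l" and j: "j < n" using assms by auto
  have "adj (A * B) $$ (i,j) = cnj (row A j \<bullet> col B i)" using assms i j by simp
  also have "\<dots> = (\<Sum>t = 0..<k. cnj (A $$ (j,t)) * cnj (B $$ (t,i)))"
    unfolding scalar_prod_def cnj_sum using assms i j by (intro sum.cong refl) auto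
  also have "\<dots> = row (adj B) i \<bullet> col (adj A) j"
    unfolding scalar_prod_def using assms i j by (intro sum.cong refl) (auto simp: mult.commute)
  also have "\<dots> = (adj B * adj A) $$ (i,j)" using assms i j by simp
  finally show "adj (A * B) $$ (i,j) = (adj B * adj A) $$ (i,j)" .
qed (use assms in auto)

lemma adj_one[simp]: "adj (1\<^sub>m n) = 1\<^sub>m n"
  by (rule eq_matI, auto)

lemma hermitian_adj: "hermitian_mat n A \<longleftrightarrow> A \<in> carrier_mat n n \<and> adj A = A"
proof
  assume h: "hermitian_mat n A"
  then have A: "A \<in> carrier_mat n n" by (simp add: hermitian_mat_def)
  have "adj A = A"
  proof (rule eq_matI)
    fix i j assume "i < dim_row A" "j < dim_col A"
    then have i: "i < n" and j: "j < n" using A by auto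
    have "adj A $$ (i,j) = cnj (A $$ (j,i))" using A i j by simp
    also have "\<dots> = A $$ (i,j)"
    proof -
      have "A $$ (i,j) = cnj (A $$ (j,i))" using h i j unfolding hermitian_mat_def by blast
      then show ?thesis by simp
    qed
    finally show "adj A $$ (i,j) = A $$ (i,j)" .
  qed (use A in simp_all)
  with A show "A \<in> carrier_mat n n \<and> adj A = A" by simp
next
  assume h: "A \<in> carrier_mat n n \<and> adj A = A"
  show "hermitian_mat n A" unfolding hermitian_mat_def
  proof (intro conjI allI impI)
    fix i j assume ij: "i < n" "j < n"
    have "adj A $$ (i,j) = cnj (A $$ (j,i))" using h ij by (subst adj_index) auto
    then show "A $$ (i, j) = cnj (A $$ (j, i))" using h by simp
  qed (use h in simp)
qed

definition unitary :: "nat \<Rightarrow> complex mat \<Rightarrow> bool" where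
  "unitary n U \<longleftrightarrow> U \<in> carrier_mat n n \<and> adj U * U = 1\<^sub>m n"

lemma unitary_right: "unitary n U \<Longrightarrow> U * adj U = 1\<^sub>m n"
  unfolding unitary_def using mat_mult_left_right_inverse[of "adj U" n U] by auto

lemma unitary_completion:
  assumes v: "v \<in> carrier_vec n" and v1: "v \<bullet>c v = 1"
  shows "\<exists>W. unitary n W \<and> col W 0 = v"
proof -
  have v0: "v \<noteq> 0\<^sub>v n" using conjugate_square_eq_0_vec[OF v] v1 by (metis zero_neq_one)
  interpret cof_vec_space n "TYPE(complex)" .
  define b where "b = basis_completion v"
  note bc = basis_completion[OF v v0, folded b_def]
  have n0: "n > 0"
  proof (rule ccontr)
    assume "\<not> n > 0"
    then have "v = 0\<^sub>v n" using v by auto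
    then show False using v0 by simp
  qed
  obtain vs where bv: "b = v # vs" using bc(6) bc(7) n0 by (cases b) auto
  define ws where "ws = gram_schmidt n b"
  from gram_schmidt_result[OF bc(2) bc(4) bc(5) refl, folded ws_def]
  have ws: "set ws \<subseteq> carrier_vec n" "corthogonal ws" "length ws = n" by (auto simp: bc)
  have hdws: "hd ws = v" unfolding ws_def bv using gram_schmidt_hd[OF v] by simp
  define nr where "nr = (\<lambda>w :: complex vec. complex_of_real (sqrt (Re (w \<bullet>c w))))"
  define us where "us = map (\<lambda>w. (1 / nr w) \<cdot>\<^sub>v w) ws"
  define W where "W = mat_of_cols n us"
  have wsc: "i < n \<Longrightarrow> ws ! i \<in> carrier_vec n" for i using ws by auto
  have pos: "i < n \<Longrightarrow> ws ! i \<bullet>c ws ! i = nr (ws ! i) * cnj (nr (ws ! i)) \<and> nr (ws ! i) \<noteq> 0" for i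
  proof -
    assume i: "i < n"
    have ne: "ws ! i \<bullet>c ws ! i \<noteq> 0" using corthogonalD[OF ws(2), of i i] i ws(3) by auto
    have ge: "ws ! i \<bullet>c ws ! i \<ge> 0" by auto
    then have im: "Im (ws ! i \<bullet>c ws ! i) = 0" and re: "Re (ws ! i \<bullet>c ws ! i) \<ge> 0"
      by (auto simp: less_eq_complex_def)
    with ne have re': "Re (ws ! i \<bullet>c ws ! i) > 0" using complex_eq_iff by force
    show ?thesis unfolding nr_def using im re'
      by (auto simp: complex_eq_iff)
  qed
  have W: "W \<in> carrier_mat n n" unfolding W_def us_def using ws by auto
  have usi: "i < n \<Longrightarrow> us ! i = (1 / nr (ws ! i)) \<cdot>\<^sub>v ws ! i" for i using ws by (auto simp: us_def)
  have Wij: "i < n \<Longrightarrow> j < n \<Longrightarrow> W $$ (i,j) = (1 / nr (ws ! j)) * (ws ! j $ i)" for i j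
    unfolding W_def using ws carrier_vecD[OF wsc[of j]] by (auto simp: us_def mat_of_cols_def)
  have "adj W * W = 1\<^sub>m n"
  proof (rule eq_matI)
    fix i j assume i: "i < dim_row (1\<^sub>m n)" and j: "j < dim_col (1\<^sub>m n)"
    then have i: "i < n" and j: "j < n" by auto
    have "(adj W * W) $$ (i,j) = (\<Sum>t = 0..<n. cnj (W $$ (t,i)) * W $$ (t,j))"
      using W i j by (auto simp: scalar_prod_def)
    also have "\<dots> = (\<Sum>t = 0..<n. cnj (1 / nr (ws ! i)) * (1 / nr (ws ! j)) * (ws ! j $ t * cnj (ws ! i $ t)))"
      using i j by (intro sum.cong refl) (auto simp: Wij)
    also have "\<dots> = cnj (1 / nr (ws ! i)) * (1 / nr (ws ! j)) * (ws ! j \<bullet>c ws ! i)"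
      using wsc[OF i] wsc[OF j] by (simp add: scalar_prod_def sum_distrib_left)
    also have "\<dots> = 1\<^sub>m n $$ (i,j)"
    proof (cases "i = j")
      case True
      then show ?thesis using pos[OF i] i by (auto simp: field_simps)
    next
      case False
      then show ?thesis using corthogonalD[OF ws(2), of j i] i j ws(3) by auto
    qed
    finally show "(adj W * W) $$ (i,j) = 1\<^sub>m n $$ (i,j)" .
  qed (use W in auto)
  moreover have "col W 0 = v"
  proof -
    have ws0: "ws ! 0 = v" using hdws ws(3) n0 by (cases ws, auto)
    have "nr v = 1" unfolding nr_def using v1 by simp
    then show ?thesis unfolding W_def using n0 ws(3) ws0 v
      by (subst col_mat_of_cols, auto simp: us_def)
  qed
  ultimately show ?thesis using W unfolding unitary_def by blast
qed

definition ext1 :: "complex \<Rightarrow> complex mat \<Rightarrow> complex mat" where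
  "ext1 c M = mat (Suc (dim_row M)) (Suc (dim_col M)) (\<lambda>(i,j). if i = 0 then (if j = 0 then c else 0)
     else if j = 0 then 0 else M $$ (i - 1, j - 1))"

lemma ext1_carrier[simp]: "M \<in> carrier_mat k l \<Longrightarrow> ext1 c M \<in> carrier_mat (Suc k) (Suc l)"
  by (auto simp: ext1_def)

lemma ext1_dims[simp]: "dim_row (ext1 c M) = Suc (dim_row M)" "dim_col (ext1 c M) = Suc (dim_col M)"
  by (auto simp: ext1_def)

lemma ext1_index: "i < Suc (dim_row M) \<Longrightarrow> j < Suc (dim_col M) \<Longrightarrow> ext1 c M $$ (i,j) =
  (if i = 0 then (if j = 0 then c else 0) else if j = 0 then 0 else M $$ (i - 1, j - 1))"
  by (auto simp: ext1_def)

lemma ext1_mult: assumes M: "M \<in> carrier_mat k l" and N: "N \<in> carrier_mat l p"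
  shows "ext1 c M * ext1 d N = ext1 (c * d) (M * N)"
proof (rule eq_matI)
  fix i j assume i: "i < dim_row (ext1 (c * d) (M * N))" and j: "j < dim_col (ext1 (c * d) (M * N))"
  then have i: "i < Suc k" and j: "j < Suc p" using M N by auto
  have "(ext1 c M * ext1 d N) $$ (i,j) = (\<Sum>t = 0..<Suc l. ext1 c M $$ (i,t) * ext1 d N $$ (t,j))"
    using M N i j by (simp add: scalar_prod_def)
  also have "\<dots> = ext1 c M $$ (i,0) * ext1 d N $$ (0,j) + (\<Sum>t = 0..<l. ext1 c M $$ (i,Suc t) * ext1 d N $$ (Suc t,j))"
    by (subst sum.atLeast0_lessThan_Suc_shift) simp
  also have "\<dots> = ext1 (c * d) (M * N) $$ (i,j)"
  proof (cases "i = 0")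
    case True
    then show ?thesis using M N i j by (simp add: ext1_index)
  next
    case i0: False
    show ?thesis
    proof (cases "j = 0")
      case True
      then show ?thesis using M N i j i0 by (simp add: ext1_index)
    next
      case False
      have "(\<Sum>t = 0..<l. ext1 c M $$ (i,Suc t) * ext1 d N $$ (Suc t,j)) = 
        (\<Sum>t = 0..<l. M $$ (i - 1, t) * N $$ (t, j - 1))"
        using M N i j i0 False by (intro sum.cong refl) (simp add: ext1_index)
      also have "\<dots> = (M * N) $$ (i - 1, j - 1)"
        using M N i j i0 False by (simp add: scalar_prod_def)
      finally show ?thesis using M N i j i0 False by (simp add: ext1_index)
    qed
  qed
  finally show "(ext1 c M * ext1 d N) $$ (i,j) = ext1 (c * d) (M * N) $$ (i,j)" .
qed (use M N in auto)

lemma ext1_adj: "adj (ext1 c M) = ext1 (cnj c) (adj M)"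
  by (rule eq_matI) (auto simp: ext1_index)

lemma ext1_one: "ext1 1 (1\<^sub>m k) = 1\<^sub>m (Suc k)"
  by (rule eq_matI) (auto simp: ext1_index)

lemma ext1_diag: "diagonal_mat M \<Longrightarrow> diagonal_mat (ext1 c M)"
  unfolding diagonal_mat_def by (auto simp: ext1_index)

lemma normalize_vec: fixes v :: "complex vec" assumes v: "v \<in> carrier_vec n" and v0: "v \<noteq> 0\<^sub>v n"
  shows "\<exists>c. c \<noteq> 0 \<and> (c \<cdot>\<^sub>v v) \<bullet>c (c \<cdot>\<^sub>v v) = 1"
proof -
  have ne: "v \<bullet>c v \<noteq> 0" using conjugate_square_eq_0_vec[OF v] v0 by simp
  have ge: "v \<bullet>c v \<ge> 0" by auto
  then have im: "Im (v \<bullet>c v) = 0" and re: "Re (v \<bullet>c v) \<ge> 0"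
    by (auto simp: less_eq_complex_def)
  with ne have re': "Re (v \<bullet>c v) > 0" using complex_eq_iff by force
  define c where "c = complex_of_real (1 / sqrt (Re (v \<bullet>c v)))"
  have "(c \<cdot>\<^sub>v v) \<bullet>c (c \<cdot>\<^sub>v v) = c * cnj c * (v \<bullet>c v)"
    using v by (simp add: scalar_prod_def sum_distrib_left algebra_simps)
  also have "\<dots> = 1" using im re' unfolding c_def
    by (simp add: complex_eq_iff)
  finally have "(c \<cdot>\<^sub>v v) \<bullet>c (c \<cdot>\<^sub>v v) = 1" .
  moreover have "c \<noteq> 0" using re' by (simp add: c_def)
  ultimately show ?thesis by blast
qed

lemma spectral:
  "hermitian_mat n A \<Longrightarrow> \<exists>U D. unitary n U \<and> D \<in> carrier_mat n n \<and> diagonal_mat D \<and> A = U * D * adj U"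
proof (induction n arbitrary: A)
  case 0
  then have A: "A \<in> carrier_mat 0 0" by (simp add: hermitian_mat_def)
  have "unitary 0 (1\<^sub>m 0)" unfolding unitary_def by (auto intro!: eq_matI)
  moreover have "A = 1\<^sub>m 0 * A * adj (1\<^sub>m 0)" using A by (intro eq_matI) auto
  moreover have "diagonal_mat A" using A unfolding diagonal_mat_def by auto
  ultimately show ?case using A by blast
next
  case (Suc n)
  have A: "A \<in> carrier_mat (Suc n) (Suc n)" and hA: "adj A = A" using Suc.prems hermitian_adj by auto
  from spectrum_non_empty[OF A] obtain e where "eigenvalue A e" unfolding spectrum_def by auto
  from find_eigenvector[OF A this] obtain v0 where "eigenvector A v0 e" by blast
  then have v0: "v0 \<in> carrier_vec (Suc n)" "v0 \<noteq> 0\<^sub>v (Suc n)" and Av0: "A *\<^sub>v v0 = e \<cdot>\<^sub>v v0"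
    unfolding eigenvector_def using A by auto
  from normalize_vec[OF v0] obtain c where c: "(c \<cdot>\<^sub>v v0) \<bullet>c (c \<cdot>\<^sub>v v0) = 1" by blast
  define v where "v = c \<cdot>\<^sub>v v0"
  have v: "v \<in> carrier_vec (Suc n)" using v0 by (simp add: v_def)
  have Av: "A *\<^sub>v v = e \<cdot>\<^sub>v v" unfolding v_def using A v0 Av0
    by (simp add: mult_mat_vec smult_smult_assoc mult.commute)
  from unitary_completion[OF v c[folded v_def]] obtain W where
    uW: "unitary (Suc n) W" and W0: "col W 0 = v" by blast
  have W: "W \<in> carrier_mat (Suc n) (Suc n)" and WW: "adj W * W = 1\<^sub>m (Suc n)"
    using uW unfolding unitary_def by auto
  have WW': "W * adj W = 1\<^sub>m (Suc n)" using unitary_right[OF uW] .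
  have aW: "adj W \<in> carrier_mat (Suc n) (Suc n)" using W by simp
  define A' where "A' = adj W * A * W"
  have A': "A' \<in> carrier_mat (Suc n) (Suc n)" unfolding A'_def using A W by auto
  have hA': "adj A' = A'"
  proof -
    have AW: "adj W * A \<in> carrier_mat (Suc n) (Suc n)" using mult_carrier_mat[OF adj_carrier[OF W] A] .
    have "adj A' = adj W * adj (adj W * A)" unfolding A'_def using adj_mult[OF AW W] by simp
    also have "adj (adj W * A) = adj A * adj (adj W)" using adj_mult[OF adj_carrier[OF W] A] .
    finally show ?thesis unfolding A'_def using A W hA by (simp add: assoc_mult_mat[of _ "Suc n" "Suc n" _ "Suc n" _ "Suc n"])
  qed
  have col0: "A' $$ (i,0) = (if i = 0 then e else 0)" if i: "i < Suc n" for i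
  proof -
    have "A' $$ (i,0) = (adj W * (A * W)) $$ (i,0)" unfolding A'_def using assoc_mult_mat[OF aW A W] by simp
    also have "\<dots> = row (adj W) i \<bullet> col (A * W) 0" using A W i by simp
    also have "col (A * W) 0 = A *\<^sub>v col W 0" by (rule col_mult2[OF A W]) simp
    also have "\<dots> = e \<cdot>\<^sub>v v" using W0 Av by simp
    also have "row (adj W) i \<bullet> (e \<cdot>\<^sub>v v) = e * (row (adj W) i \<bullet> v)"
      using W v i by (simp add: scalar_prod_smult_distrib[of _ "Suc n"])
    also have "row (adj W) i \<bullet> v = (adj W * W) $$ (i,0)" using W i W0 by simp
    also have "\<dots> = (if i = 0 then 1 else 0)" using WW i by simp
    finally show ?thesis by simp
  qed
  have sym0: "A' $$ (0,j) = cnj (A' $$ (j,0))" if j: "j < Suc n" for j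
  proof -
    have "A' $$ (0,j) = adj A' $$ (0,j)" using hA' by simp
    also have "\<dots> = cnj (A' $$ (j,0))" using A' j by simp
    finally show ?thesis .
  qed
  have ereal: "cnj e = e" using sym0[of 0] col0[of 0] by simp
  have row0: "A' $$ (0,j) = (if j = 0 then e else 0)" if j: "j < Suc n" for j
    using sym0[OF j] col0[OF j] ereal by simp
  define A3 where "A3 = mat n n (\<lambda>(i,j). A' $$ (Suc i, Suc j))"
  have A3: "A3 \<in> carrier_mat n n" unfolding A3_def by simp
  have hA3: "hermitian_mat n A3" unfolding hermitian_adj
  proof (intro conjI A3)
    show "adj A3 = A3"
    proof (rule eq_matI)
      fix i j assume "i < dim_row A3" "j < dim_col A3"
      then have i: "i < n" and j: "j < n" using A3 by auto
      have "adj A3 $$ (i,j) = cnj (A' $$ (Suc j, Suc i))" using i j by (simp add: A3_def)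
      also have "\<dots> = adj A' $$ (Suc i, Suc j)" using A' i j by simp
      also have "\<dots> = A3 $$ (i,j)" using hA' i j by (simp add: A3_def)
      finally show "adj A3 $$ (i,j) = A3 $$ (i,j)" .
    qed (use A3 in simp_all)
  qed
  from Suc.IH[OF hA3] obtain V D3 where uV: "unitary n V" and D3: "D3 \<in> carrier_mat n n"
    and dD3: "diagonal_mat D3" and A3V: "A3 = V * D3 * adj V" by blast
  have V: "V \<in> carrier_mat n n" and VV: "adj V * V = 1\<^sub>m n" using uV unfolding unitary_def by auto
  have A'ext: "A' = ext1 e A3"
  proof (rule eq_matI)
    fix i j assume "i < dim_row (ext1 e A3)" "j < dim_col (ext1 e A3)"
    then have i: "i < Suc n" and j: "j < Suc n" using A3 by auto
    show "A' $$ (i,j) = ext1 e A3 $$ (i,j)"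
    proof (cases "i = 0")
      case True
      then show ?thesis using row0[OF j] i j A3 by (simp add: ext1_index)
    next
      case False
      show ?thesis
      proof (cases "j = 0")
        case True
        then show ?thesis using col0[OF i] False i j A3 by (simp add: ext1_index)
      next
        case j0: False
        then show ?thesis using False i j A3 by (auto simp: ext1_index A3_def)
      qed
    qed
  qed (use A' A3 in simp_all)
  define V1 where "V1 = ext1 1 V"
  have V1: "V1 \<in> carrier_mat (Suc n) (Suc n)" unfolding V1_def using V by simp
  have adjV1: "adj V1 = ext1 1 (adj V)" unfolding V1_def by (simp add: ext1_adj)
  have aV1: "adj V1 \<in> carrier_mat (Suc n) (Suc n)" using V1 by simp
  define D where "D = ext1 e D3"
  have D: "D \<in> carrier_mat (Suc n) (Suc n)" unfolding D_def using D3 by simp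
  have dD: "diagonal_mat D" unfolding D_def using dD3 by (rule ext1_diag)
  have A'eq: "A' = V1 * D * adj V1"
  proof -
    have "V1 * D * adj V1 = ext1 (1 * e) (V * D3) * ext1 1 (adj V)"
      unfolding adjV1 unfolding V1_def D_def using V D3 by (simp add: ext1_mult)
    also have "\<dots> = ext1 e (V * D3 * adj V)" using V D3 by (simp add: ext1_mult[of _ n n _ n])
    finally show ?thesis using A'ext A3V by simp
  qed
  define U where "U = W * V1"
  have U: "U \<in> carrier_mat (Suc n) (Suc n)" unfolding U_def using W V1 by simp
  have adjU: "adj U = adj V1 * adj W" unfolding U_def using W V1 by (simp add: adj_mult)
  have V1V1: "adj V1 * V1 = 1\<^sub>m (Suc n)"
    unfolding adjV1 unfolding V1_def using ext1_mult[OF adj_carrier[OF V] V, of 1 1] VV by (simp add: ext1_one)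
  have uU: "unitary (Suc n) U" unfolding unitary_def
  proof (intro conjI U)
    have WV1: "W * V1 \<in> carrier_mat (Suc n) (Suc n)" using W V1 by simp
    have "adj U * U = adj V1 * adj W * (W * V1)" unfolding adjU unfolding U_def ..
    also have "\<dots> = adj V1 * (adj W * (W * V1))" using assoc_mult_mat[OF aV1 aW WV1] .
    also have "adj W * (W * V1) = (adj W * W) * V1" using assoc_mult_mat[OF aW W V1] by simp
    also have "\<dots> = V1" using WW V1 by simp
    also have "adj V1 * V1 = 1\<^sub>m (Suc n)" using V1V1 .
    finally show "adj U * U = 1\<^sub>m (Suc n)" .
  qed
  have "A = W * A' * adj W"
  proof -
    have AW: "adj W * A \<in> carrier_mat (Suc n) (Suc n)" using mult_carrier_mat[OF aW A] .
    have "W * A' * adj W = W * (A' * adj W)" using assoc_mult_mat[OF W A' aW] .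
    also have "A' * adj W = adj W * A * (W * adj W)" unfolding A'_def using assoc_mult_mat[OF AW W aW] .
    also have "\<dots> = adj W * A" using WW' right_mult_one_mat[OF AW] by simp
    also have "W * (adj W * A) = (W * adj W) * A" using assoc_mult_mat[OF W aW A] by simp
    also have "\<dots> = A" using WW' A by simp
    finally show ?thesis by simp
  qed
  also have "\<dots> = W * (V1 * D * adj V1) * adj W" using A'eq by simp
  also have "\<dots> = U * D * adj U"
  proof -
    have VD: "V1 * D \<in> carrier_mat (Suc n) (Suc n)" using mult_carrier_mat[OF V1 D] .
    have WVD: "W * V1 * D \<in> carrier_mat (Suc n) (Suc n)" using mult_carrier_mat[OF mult_carrier_mat[OF W V1] D] .
    have "U * D * adj U = W * V1 * D * (adj V1 * adj W)" unfolding adjU unfolding U_def ..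
    also have "\<dots> = W * V1 * D * adj V1 * adj W"
      using assoc_mult_mat[OF WVD aV1 aW] by simp
    also have "W * V1 * D = W * (V1 * D)" using assoc_mult_mat[OF W V1 D] .
    also have "W * (V1 * D) * adj V1 = W * (V1 * D * adj V1)" using assoc_mult_mat[OF W VD aV1] .
    finally show ?thesis by simp
  qed
  finally show ?case using uU D dD by blast
qed

definition qf :: "nat \<Rightarrow> complex mat \<Rightarrow> complex vec \<Rightarrow> complex" where
  "qf d X v = (\<Sum>i<d. \<Sum>j<d. cnj (v $ i) * X $$ (i, j) * v $ j)"

lemma psd_iff: "psd_mat d X \<longleftrightarrow> X \<in> carrier_mat d d \<and> (\<forall>v \<in> carrier_vec d. qf d X v \<ge> 0)"
  unfolding psd_mat_def qf_def Let_def by (auto simp: less_eq_complex_def)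

lemma mult_index_sum: "A \<in> carrier_mat n k \<Longrightarrow> B \<in> carrier_mat k m \<Longrightarrow> i < n \<Longrightarrow> j < m \<Longrightarrow>
  (A * B) $$ (i,j) = (\<Sum>t<k. A $$ (i,t) * B $$ (t,j))"
  by (simp add: scalar_prod_def atLeast0LessThan)

lemma mult_vec_index_sum: "A \<in> carrier_mat n k \<Longrightarrow> v \<in> carrier_vec k \<Longrightarrow> i < n \<Longrightarrow>
  (A *\<^sub>v v) $ i = (\<Sum>t<k. A $$ (i,t) * v $ t)"
  by (simp add: scalar_prod_def atLeast0LessThan)

lemma row_sum: "A \<in> carrier_mat n k \<Longrightarrow> v \<in> carrier_vec k \<Longrightarrow> i < n \<Longrightarrow>
  row A i \<bullet> v = (\<Sum>t<k. A $$ (i,t) * v $ t)"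
  by (simp add: scalar_prod_def atLeast0LessThan)

lemma qf_alt: assumes "X \<in> carrier_mat d d" "v \<in> carrier_vec d"
  shows "qf d X v = conjugate v \<bullet> (X *\<^sub>v v)"
proof -
  have "conjugate v \<bullet> (X *\<^sub>v v) = (\<Sum>i<d. cnj (v $ i) * (X *\<^sub>v v) $ i)"
    using assms by (simp add: scalar_prod_def atLeast0LessThan)
  also have "\<dots> = (\<Sum>i<d. cnj (v $ i) * (\<Sum>t<d. X $$ (i,t) * v $ t))"
    using assms by (intro sum.cong refl) (simp add: row_sum[OF assms(1,2)])
  also have "\<dots> = qf d X v" unfolding qf_def by (simp add: sum_distrib_left mult.assoc)
  finally show ?thesis by simp
qed

lemma conj_move: assumes U: "U \<in> carrier_mat n k" and v: "v \<in> carrier_vec n" and y: "y \<in> carrier_vec k"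
  shows "conjugate v \<bullet> (U *\<^sub>v y) = conjugate (adj U *\<^sub>v v) \<bullet> y"
proof -
  have "conjugate v \<bullet> (U *\<^sub>v y) = (\<Sum>i<n. cnj (v $ i) * (\<Sum>t<k. U $$ (i,t) * y $ t))"
    using assms by (simp add: scalar_prod_def atLeast0LessThan mult_vec_index_sum)
  also have "\<dots> = (\<Sum>i<n. \<Sum>t<k. cnj (v $ i) * U $$ (i,t) * y $ t)"
    by (simp add: sum_distrib_left mult.assoc)
  also have "\<dots> = (\<Sum>t<k. \<Sum>i<n. cnj (v $ i) * U $$ (i,t) * y $ t)"
    by (rule sum.swap)
  also have "\<dots> = (\<Sum>t<k. cnj (\<Sum>i<n. cnj (U $$ (i,t)) * v $ i) * y $ t)"
    by (simp add: sum_distrib_right sum_distrib_left cnj_sum mult_ac)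
  also have "\<dots> = conjugate (adj U *\<^sub>v v) \<bullet> y"
  proof -
    have "conjugate (adj U *\<^sub>v v) \<bullet> y = (\<Sum>t<k. cnj ((adj U *\<^sub>v v) $ t) * y $ t)"
      using assms by (simp add: scalar_prod_def atLeast0LessThan)
    also have "\<dots> = (\<Sum>t<k. cnj (\<Sum>i<n. cnj (U $$ (i,t)) * v $ i) * y $ t)"
      using assms by (intro sum.cong refl) (simp add: row_sum[OF adj_carrier[OF U] v] cnj_sum mult.commute)
    finally show ?thesis by simp
  qed
  finally show ?thesis .
qed

lemma qf_conj: assumes U: "U \<in> carrier_mat n n" and D: "D \<in> carrier_mat n n" and v: "v \<in> carrier_vec n"
  shows "qf n (U * D * adj U) v = qf n D (adj U *\<^sub>v v)"
proof -
  have aU: "adj U \<in> carrier_mat n n" using U by simp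
  have w: "adj U *\<^sub>v v \<in> carrier_vec n" using mult_mat_vec_carrier[OF aU v] .
  have Dw: "D *\<^sub>v (adj U *\<^sub>v v) \<in> carrier_vec n" using mult_mat_vec_carrier[OF D w] .
  have UDU: "U * D * adj U \<in> carrier_mat n n" using mult_carrier_mat[OF mult_carrier_mat[OF U D] aU] .
  have "(U * D * adj U) *\<^sub>v v = U *\<^sub>v (D *\<^sub>v (adj U *\<^sub>v v))"
    using assoc_mult_mat_vec[OF mult_carrier_mat[OF U D] aU v] assoc_mult_mat_vec[OF U D w] by simp
  then have "qf n (U * D * adj U) v = conjugate v \<bullet> (U *\<^sub>v (D *\<^sub>v (adj U *\<^sub>v v)))"
    using qf_alt[OF UDU v] by simp
  also have "\<dots> = conjugate (adj U *\<^sub>v v) \<bullet> (D *\<^sub>v (adj U *\<^sub>v v))" using conj_move[OF U v Dw] .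
  also have "\<dots> = qf n D (adj U *\<^sub>v v)" using qf_alt[OF D w] by simp
  finally show ?thesis .
qed

lemma qf_diag: assumes D: "D \<in> carrier_mat n n" and dD: "diagonal_mat D" and w: "w \<in> carrier_vec n"
  shows "qf n D w = (\<Sum>l<n. D $$ (l,l) * (cnj (w $ l) * w $ l))"
proof -
  have "qf n D w = (\<Sum>i<n. \<Sum>j<n. if j = i then cnj (w $ i) * D $$ (i, i) * w $ i else 0)"
    unfolding qf_def using dD D unfolding diagonal_mat_def by (intro sum.cong refl) auto
  also have "\<dots> = (\<Sum>l<n. D $$ (l,l) * (cnj (w $ l) * w $ l))"
    by (simp add: mult_ac)
  finally show ?thesis .
qed

lemma qf_add: assumes "X \<in> carrier_mat d d" "Y \<in> carrier_mat d d"
  shows "qf d (X + Y) v = qf d X v + qf d Y v"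
proof -
  have "qf d (X + Y) v = (\<Sum>i<d. \<Sum>j<d. cnj (v $ i) * X $$ (i, j) * v $ j + cnj (v $ i) * Y $$ (i, j) * v $ j)"
    unfolding qf_def using assms by (intro sum.cong refl) (simp add: distrib_left distrib_right)
  also have "\<dots> = qf d X v + qf d Y v" unfolding qf_def by (simp add: sum.distrib)
  finally show ?thesis .
qed

lemma qf_smult: assumes "X \<in> carrier_mat d d" shows "qf d (c \<cdot>\<^sub>m X) v = c * qf d X v"
proof -
  have "qf d (c \<cdot>\<^sub>m X) v = (\<Sum>i<d. \<Sum>j<d. c * (cnj (v $ i) * X $$ (i, j) * v $ j))"
    unfolding qf_def using assms by (intro sum.cong refl) (simp add: mult_ac)
  also have "\<dots> = c * qf d X v" unfolding qf_def by (simp add: sum_distrib_left)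
  finally show ?thesis .
qed

lemma eig_root: assumes A: "A \<in> carrier_mat n n" and ev: "eigenvalues_are n A a"
  and z: "eigenvalue A z" shows "\<exists>i<n. z = complex_of_real (a i)"
proof -
  have "poly (char_poly A) z = 0" using z eigenvalue_root_char_poly[OF A] by simp
  then have "(\<Prod>i<n. poly [:- complex_of_real (a i), 1:] z) = 0"
    using ev unfolding eigenvalues_are_def by (simp add: poly_prod)
  then obtain i where "i < n" "poly [:- complex_of_real (a i), 1:] z = 0"
    by (auto simp: prod_zero_iff)
  then show ?thesis by auto
qed

lemma eig_of: assumes A: "A \<in> carrier_mat n n" and ev: "eigenvalues_are n A a" and i: "i < n"
  shows "eigenvalue A (complex_of_real (a i))"
proof -
  have "(\<Prod>k<n. poly [:- complex_of_real (a k), 1:] (complex_of_real (a i))) = 0"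
    using i by (intro prod_zero) auto
  then have "poly (char_poly A) (complex_of_real (a i)) = 0"
    using ev unfolding eigenvalues_are_def by (simp add: poly_prod)
  then show ?thesis using eigenvalue_root_char_poly[OF A] by simp
qed

lemma spectral_eig: assumes A: "A \<in> carrier_mat n n" and uU: "unitary n U" and D: "D \<in> carrier_mat n n"
  and dD: "diagonal_mat D" and AU: "A = U * D * adj U" and l: "l < n"
  shows "eigenvalue A (D $$ (l,l))"
proof -
  have U: "U \<in> carrier_mat n n" and UU: "adj U * U = 1\<^sub>m n" using uU unfolding unitary_def by auto
  have aU: "adj U \<in> carrier_mat n n" using U by simp
  have UD: "U * D \<in> carrier_mat n n" using mult_carrier_mat[OF U D] .
  have "A * U = U * D * (adj U * U)" unfolding AU using assoc_mult_mat[OF UD aU U] .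
  also have "\<dots> = U * D" using UU right_mult_one_mat[OF UD] by simp
  finally have AUe: "A * U = U * D" .
  have "A *\<^sub>v col U l = col (A * U) l" by (rule col_mult2[OF A U l, symmetric])
  also have "\<dots> = col (U * D) l" using AUe by simp
  also have "\<dots> = D $$ (l,l) \<cdot>\<^sub>v col U l"
  proof (rule eq_vecI)
    fix r assume "r < dim_vec (D $$ (l,l) \<cdot>\<^sub>v col U l)"
    then have r: "r < n" using U by simp
    have "col (U * D) l $ r = (\<Sum>t<n. U $$ (r,t) * D $$ (t,l))"
      using U D r l by (simp add: scalar_prod_def atLeast0LessThan)
    also have "\<dots> = (\<Sum>t<n. if t = l then U $$ (r,l) * D $$ (l,l) else 0)"
      using dD D l unfolding diagonal_mat_def by (intro sum.cong refl) auto
    also have "\<dots> = (D $$ (l,l) \<cdot>\<^sub>v col U l) $ r" using l r U by simp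
    finally show "col (U * D) l $ r = (D $$ (l,l) \<cdot>\<^sub>v col U l) $ r" .
  qed (use U D in simp)
  finally have ev: "A *\<^sub>v col U l = D $$ (l,l) \<cdot>\<^sub>v col U l" .
  have nz: "col U l \<noteq> 0\<^sub>v n"
  proof
    assume "col U l = 0\<^sub>v n"
    then have "(adj U * U) $$ (l,l) = 0" using aU U l by simp
    then show False using UU l by simp
  qed
  show ?thesis unfolding eigenvalue_def eigenvector_def
    using ev nz A U l by (intro exI[of _ "col U l"]) simp
qed

lemma psd_comb: assumes hA: "hermitian_mat n A" and ev: "eigenvalues_are n A a"
  and st: "\<forall>i<n. s * a i + t \<ge> 0"
  shows "psd_mat n (complex_of_real s \<cdot>\<^sub>m A + complex_of_real t \<cdot>\<^sub>m 1\<^sub>m n)"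
proof -
  have A: "A \<in> carrier_mat n n" using hA hermitian_adj by auto
  from spectral[OF hA] obtain U D where uU: "unitary n U" and D: "D \<in> carrier_mat n n"
    and dD: "diagonal_mat D" and AU: "A = U * D * adj U" by blast
  have U: "U \<in> carrier_mat n n" using uU unfolding unitary_def by auto
  have one: "1\<^sub>m n = U * 1\<^sub>m n * adj U" using unitary_right[OF uU] U by simp
  have Dl: "\<exists>i<n. D $$ (l,l) = complex_of_real (a i)" if l: "l < n" for l
    using eig_root[OF A ev spectral_eig[OF A uU D dD AU l]] .
  show ?thesis unfolding psd_iff
  proof (intro conjI ballI)
    show "complex_of_real s \<cdot>\<^sub>m A + complex_of_real t \<cdot>\<^sub>m 1\<^sub>m n \<in> carrier_mat n n" using A by simp
    fix v :: "complex vec" assume v: "v \<in> carrier_vec n"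
    define w where "w = adj U *\<^sub>v v"
    have w: "w \<in> carrier_vec n" unfolding w_def using mult_mat_vec_carrier[OF adj_carrier[OF U] v] .
    have "qf n (complex_of_real s \<cdot>\<^sub>m A + complex_of_real t \<cdot>\<^sub>m 1\<^sub>m n) v
      = complex_of_real s * qf n A v + complex_of_real t * qf n (1\<^sub>m n) v"
      using A by (simp add: qf_add qf_smult)
    also have "qf n A v = (\<Sum>l<n. D $$ (l,l) * (cnj (w $ l) * w $ l))"
      unfolding AU using qf_conj[OF U D v] qf_diag[OF D dD w] w_def by simp
    also have "qf n (1\<^sub>m n) v = (\<Sum>l<n. 1\<^sub>m n $$ (l,l) * (cnj (w $ l) * w $ l))"
      using qf_conj[OF U one_carrier_mat v] qf_diag[OF one_carrier_mat _ w] w_def one by (simp add: diagonal_mat_def)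
    also have "\<dots> = (\<Sum>l<n. cnj (w $ l) * w $ l)" by simp
    finally have eq: "qf n (complex_of_real s \<cdot>\<^sub>m A + complex_of_real t \<cdot>\<^sub>m 1\<^sub>m n) v =
      (\<Sum>l<n. (complex_of_real s * D $$ (l,l) + complex_of_real t) * (cnj (w $ l) * w $ l))"
      by (simp add: distrib_right sum.distrib sum_distrib_left mult.assoc)
    have "(\<Sum>l<n. (complex_of_real s * D $$ (l,l) + complex_of_real t) * (cnj (w $ l) * w $ l)) \<ge> 0"
    proof (rule sum_nonneg)
      fix l assume "l \<in> {..<n}"
      then obtain i where "i < n" and Di: "D $$ (l,l) = complex_of_real (a i)" using Dl by auto
      then have "complex_of_real s * D $$ (l,l) + complex_of_real t = complex_of_real (s * a i + t)"
        by simp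
      moreover have "complex_of_real (s * a i + t) \<ge> 0" using st \<open>i < n\<close> by (simp add: less_eq_complex_def)
      moreover have "cnj (w $ l) * w $ l \<ge> 0" by (simp add: less_eq_complex_def)
      ultimately show "(complex_of_real s * D $$ (l,l) + complex_of_real t) * (cnj (w $ l) * w $ l) \<ge> 0"
        by (metis mult_nonneg_nonneg)
    qed
    then show "qf n (complex_of_real s \<cdot>\<^sub>m A + complex_of_real t \<cdot>\<^sub>m 1\<^sub>m n) v \<ge> 0" using eq by simp
  qed
qed

lemma psd_eig: assumes B: "B \<in> carrier_mat m m" and ev: "eigenvalues_are m B b" and j: "j < m"
  and psd: "psd_mat m (complex_of_real s \<cdot>\<^sub>m B + complex_of_real t \<cdot>\<^sub>m 1\<^sub>m m)"
  shows "s * b j + t \<ge> 0"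
proof -
  from find_eigenvector[OF B eig_of[OF B ev j]] obtain x where "eigenvector B x (complex_of_real (b j))" by blast
  then have x: "x \<in> carrier_vec m" and x0: "x \<noteq> 0\<^sub>v m" and Bx: "B *\<^sub>v x = complex_of_real (b j) \<cdot>\<^sub>v x"
    unfolding eigenvector_def using B by auto
  define S where "S = conjugate x \<bullet> x"
  have S: "S = x \<bullet>c x" unfolding S_def using x by (simp add: comm_scalar_prod[of _ m])
  have Spos: "S > 0" unfolding S using x x0 by simp
  have qB: "qf m B x = complex_of_real (b j) * S"
    using qf_alt[OF B x] Bx x unfolding S_def by simp
  have q1: "qf m (1\<^sub>m m) x = S" using qf_alt[OF one_carrier_mat x] x unfolding S_def by simp
  have "qf m (complex_of_real s \<cdot>\<^sub>m B + complex_of_real t \<cdot>\<^sub>m 1\<^sub>m m) x = complex_of_real (s * b j + t) * S"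
    using B by (simp add: qf_add qf_smult qB q1 distrib_right mult.assoc)
  moreover have "qf m (complex_of_real s \<cdot>\<^sub>m B + complex_of_real t \<cdot>\<^sub>m 1\<^sub>m m) x \<ge> 0"
    using psd x unfolding psd_iff by blast
  ultimately have ge: "complex_of_real (s * b j + t) * S \<ge> 0" by simp
  have "Re S > 0" "Im S = 0" using Spos by (auto simp: less_complex_def)
  with ge show ?thesis by (auto simp: less_eq_complex_def zero_le_mult_iff)
qed

lemma sum_split: fixes f :: "nat \<Rightarrow> 'a::comm_monoid_add" and k m :: nat shows "(\<Sum>i<k*m. f i) = (\<Sum>p<k. \<Sum>s<m. f (p*m+s))"
proof -
  have "(\<Sum>i<k*m. f i) = (\<Sum>p<k. sum f {p*m..<p*m+m})"
    using sum.nat_group[of f m k] by simp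
  also have "\<dots> = (\<Sum>p<k. \<Sum>s<m. f (p*m+s))"
  proof (rule sum.cong[OF refl])
    fix p
    have "sum f {p*m..<p*m+m} = sum f {0 + p*m..<m + p*m}" by (simp add: add.commute)
    also have "\<dots> = (\<Sum>s = 0..<m. f (s + p*m))" by (rule sum.shift_bounds_nat_ivl)
    also have "\<dots> = (\<Sum>s<m. f (p*m+s))" by (simp add: atLeast0LessThan add.commute)
    finally show "sum f {p*m..<p*m+m} = (\<Sum>s<m. f (p*m+s))" .
  qed
  finally show ?thesis .
qed

lemma idx_bound: fixes p k s m :: nat shows "p < k \<Longrightarrow> s < m \<Longrightarrow> p * m + s < k * m"
proof -
  assume "p < k" "s < m"
  then have "p * m + s < p * m + m" by simp
  also have "\<dots> = Suc p * m" by simp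
  also have "\<dots> \<le> k * m" using \<open>p < k\<close> by (intro mult_le_mono1) simp
  finally show ?thesis .
qed

definition blk :: "nat \<Rightarrow> complex mat \<Rightarrow> nat \<Rightarrow> nat \<Rightarrow> complex mat" where
  "blk n X p q = mat n n (\<lambda>(r, s). X $$ (p * n + r, q * n + s))"

lemma single_term:
  fixes k m n :: nat and g :: "nat \<Rightarrow> complex" and x :: "complex vec" and w :: "complex vec"
  defines "z \<equiv> (\<lambda>p. \<Sum>s<m. cnj (g s) * w $ (p*m+s))"
  defines "y \<equiv> vec (k*n) (\<lambda>i. z (i div n) * x $ (i mod n))"
  shows "(\<Sum>i<k*m. \<Sum>j<k*m. cnj (w $ i) * (qf n (blk n X (i div m) (j div m)) x * g (i mod m) * cnj (g (j mod m))) * w $ j)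
    = qf (k*n) X y"
proof -
  let ?Q = "\<lambda>p q. qf n (blk n X p q) x"
  have "(\<Sum>i<k*m. \<Sum>j<k*m. cnj (w $ i) * (qf n (blk n X (i div m) (j div m)) x * g (i mod m) * cnj (g (j mod m))) * w $ j)
    = (\<Sum>p<k. \<Sum>r<m. \<Sum>q<k. \<Sum>s<m. cnj (w $ (p*m+r)) * (?Q p q * g r * cnj (g s)) * w $ (q*m+s))"
    by (simp add: sum_split)
  also have "\<dots> = (\<Sum>p<k. \<Sum>q<k. \<Sum>r<m. \<Sum>s<m. cnj (w $ (p*m+r)) * (?Q p q * g r * cnj (g s)) * w $ (q*m+s))"
    by (intro sum.cong[OF refl] sum.swap)
  also have "\<dots> = (\<Sum>p<k. \<Sum>q<k. cnj (z p) * ?Q p q * z q)"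
  proof (intro sum.cong[OF refl])
    fix p q
    show "(\<Sum>r<m. \<Sum>s<m. cnj (w $ (p*m+r)) * (?Q p q * g r * cnj (g s)) * w $ (q*m+s)) = cnj (z p) * ?Q p q * z q"
      unfolding z_def by (simp add: cnj_sum sum_distrib_left sum_distrib_right mult_ac)
  qed
  also have "\<dots> = qf (k*n) X y"
  proof -
    have yi: "y $ (p*n+a) = z p * x $ a" if "p < k" "a < n" for p a
      unfolding y_def using idx_bound[OF that] that by simp
    have "qf (k*n) X y = (\<Sum>p<k. \<Sum>a<n. \<Sum>q<k. \<Sum>b<n. cnj (y $ (p*n+a)) * X $$ (p*n+a, q*n+b) * y $ (q*n+b))"
      unfolding qf_def by (simp add: sum_split)
    also have "\<dots> = (\<Sum>p<k. \<Sum>q<k. \<Sum>a<n. \<Sum>b<n. cnj (y $ (p*n+a)) * X $$ (p*n+a, q*n+b) * y $ (q*n+b))"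
      by (intro sum.cong[OF refl] sum.swap)
    also have "\<dots> = (\<Sum>p<k. \<Sum>q<k. \<Sum>a<n. \<Sum>b<n. cnj (z p) * (cnj (x $ a) * X $$ (p*n+a, q*n+b) * x $ b) * z q)"
      by (intro sum.cong[OF refl]) (simp add: yi mult_ac)
    also have "\<dots> = (\<Sum>p<k. \<Sum>q<k. cnj (z p) * ?Q p q * z q)"
    proof (intro sum.cong[OF refl])
      fix p q
      have "?Q p q = (\<Sum>a<n. \<Sum>b<n. cnj (x $ a) * X $$ (p*n+a, q*n+b) * x $ b)"
        unfolding qf_def blk_def by (intro sum.cong[OF refl]) simp
      then show "(\<Sum>a<n. \<Sum>b<n. cnj (z p) * (cnj (x $ a) * X $$ (p*n+a, q*n+b) * x $ b) * z q) = cnj (z p) * ?Q p q * z q"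
        by (simp add: sum_distrib_left sum_distrib_right)
    qed
    finally show ?thesis by simp
  qed
  finally show ?thesis .
qed

definition cpmap :: "nat \<Rightarrow> nat \<Rightarrow> 'a set \<Rightarrow> ('a \<Rightarrow> real) \<Rightarrow> ('a \<Rightarrow> complex vec) \<Rightarrow> ('a \<Rightarrow> nat \<Rightarrow> complex) \<Rightarrow> complex mat \<Rightarrow> complex mat" where
  "cpmap n m T c x g X = mat m m (\<lambda>(r,s). \<Sum>t\<in>T. complex_of_real (c t) * (qf n X (x t) * g t r * cnj (g t s)))"

lemma cpmap_index: "r < m \<Longrightarrow> s < m \<Longrightarrow> cpmap n m T c x g X $$ (r,s) =
  (\<Sum>t\<in>T. complex_of_real (c t) * (qf n X (x t) * g t r * cnj (g t s)))"
  by (simp add: cpmap_def)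

lemma cpmap_cp: assumes T: "finite T" and c: "\<forall>t\<in>T. c t \<ge> 0"
  shows "completely_positive n m (cpmap n m T c x g)"
  unfolding completely_positive_def
proof (intro conjI allI impI)
  show "linear_map_mat n m (cpmap n m T c x g)" unfolding linear_map_mat_def
  proof (intro conjI ballI allI)
    fix X :: "complex mat" assume "X \<in> carrier_mat n n"
    show "cpmap n m T c x g X \<in> carrier_mat m m" by (simp add: cpmap_def)
  next
    fix X Y :: "complex mat" assume X: "X \<in> carrier_mat n n" and Y: "Y \<in> carrier_mat n n"
    show "cpmap n m T c x g (X + Y) = cpmap n m T c x g X + cpmap n m T c x g Y"
    proof (rule eq_matI)
      fix i j assume "i < dim_row (cpmap n m T c x g X + cpmap n m T c x g Y)"
        "j < dim_col (cpmap n m T c x g X + cpmap n m T c x g Y)"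
      then have i: "i < m" and j: "j < m" by (auto simp: cpmap_def)
      show "cpmap n m T c x g (X + Y) $$ (i,j) = (cpmap n m T c x g X + cpmap n m T c x g Y) $$ (i,j)"
        using i j X Y by (simp add: cpmap_def qf_add distrib_left distrib_right sum.distrib)
    qed (auto simp: cpmap_def)
  next
    fix a :: complex and X :: "complex mat" assume X: "X \<in> carrier_mat n n"
    show "cpmap n m T c x g (a \<cdot>\<^sub>m X) = a \<cdot>\<^sub>m cpmap n m T c x g X"
    proof (rule eq_matI)
      fix i j assume "i < dim_row (a \<cdot>\<^sub>m cpmap n m T c x g X)" "j < dim_col (a \<cdot>\<^sub>m cpmap n m T c x g X)"
      then have i: "i < m" and j: "j < m" by (auto simp: cpmap_def)
      show "cpmap n m T c x g (a \<cdot>\<^sub>m X) $$ (i,j) = (a \<cdot>\<^sub>m cpmap n m T c x g X) $$ (i,j)"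
        using i j X by (simp add: cpmap_def qf_smult sum_distrib_left mult_ac)
    qed (auto simp: cpmap_def)
  qed
next
  fix k and X :: "complex mat" assume psd: "psd_mat (k * n) X"
  let ?F = "\<lambda>t i j. qf n (blk n X (i div m) (j div m)) (x t) * g t (i mod m) * cnj (g t (j mod m))"
  show "psd_mat (k * m) (ampliation k n m (cpmap n m T c x g) X)" unfolding psd_iff
  proof (intro conjI ballI)
    show "ampliation k n m (cpmap n m T c x g) X \<in> carrier_mat (k * m) (k * m)"
      by (simp add: ampliation_def)
    fix w :: "complex vec" assume w: "w \<in> carrier_vec (k * m)"
    define y where "y = (\<lambda>t. vec (k*n) (\<lambda>i. (\<Sum>s<m. cnj (g t s) * w $ ((i div n)*m+s)) * x t $ (i mod n)))"
    have amp: "ampliation k n m (cpmap n m T c x g) X $$ (i,j) = (\<Sum>t\<in>T. complex_of_real (c t) * ?F t i j)"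
      if "i < k * m" "j < k * m" for i j
    proof -
      have m: "m > 0" using that by (cases m) auto
      then have "i mod m < m" "j mod m < m" by auto
      then show ?thesis using that unfolding ampliation_def blk_def by (simp add: cpmap_index)
    qed
    have "qf (k*m) (ampliation k n m (cpmap n m T c x g) X) w =
      (\<Sum>i<k*m. \<Sum>j<k*m. cnj (w $ i) * ampliation k n m (cpmap n m T c x g) X $$ (i,j) * w $ j)"
      by (simp only: qf_def)
    also have "\<dots> = (\<Sum>i<k*m. \<Sum>j<k*m. cnj (w $ i) * (\<Sum>t\<in>T. complex_of_real (c t) * ?F t i j) * w $ j)"
      by (intro sum.cong[OF refl]) (simp only: amp lessThan_iff)
    also have "\<dots> = (\<Sum>i<k*m. \<Sum>j<k*m. \<Sum>t\<in>T. cnj (w $ i) * (complex_of_real (c t) * ?F t i j) * w $ j)"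
      by (simp add: sum_distrib_left sum_distrib_right)
    also have "\<dots> = (\<Sum>i<k*m. \<Sum>t\<in>T. \<Sum>j<k*m. cnj (w $ i) * (complex_of_real (c t) * ?F t i j) * w $ j)"
      by (intro sum.cong[OF refl] sum.swap)
    also have "\<dots> = (\<Sum>t\<in>T. \<Sum>i<k*m. \<Sum>j<k*m. cnj (w $ i) * (complex_of_real (c t) * ?F t i j) * w $ j)"
      by (rule sum.swap)
    also have "\<dots> = (\<Sum>t\<in>T. complex_of_real (c t) * (\<Sum>i<k*m. \<Sum>j<k*m. cnj (w $ i) * ?F t i j * w $ j))"
      by (simp add: sum_distrib_left mult_ac)
    also have "\<dots> = (\<Sum>t\<in>T. complex_of_real (c t) * qf (k*n) X (y t))"
      unfolding y_def by (simp add: single_term)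
    finally have eq: "qf (k*m) (ampliation k n m (cpmap n m T c x g) X) w =
      (\<Sum>t\<in>T. complex_of_real (c t) * qf (k*n) X (y t))" .
    have "(\<Sum>t\<in>T. complex_of_real (c t) * qf (k*n) X (y t)) \<ge> 0"
    proof (rule sum_nonneg)
      fix t assume t: "t \<in> T"
      have "qf (k*n) X (y t) \<ge> 0" using psd unfolding psd_iff y_def by simp
      moreover have "complex_of_real (c t) \<ge> 0" using c t by (simp add: less_eq_complex_def)
      ultimately show "complex_of_real (c t) * qf (k*n) X (y t) \<ge> 0" by (metis mult_nonneg_nonneg)
    qed
    then show "qf (k*m) (ampliation k n m (cpmap n m T c x g) X) w \<ge> 0" using eq by simp
  qed
qed

definition C0 :: "nat \<Rightarrow> nat \<Rightarrow> (nat \<Rightarrow> real) \<Rightarrow> (nat \<Rightarrow> real) \<Rightarrow> bool" where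
  "C0 n m a b \<longleftrightarrow> ((\<forall>i<n. a i \<ge> 0) \<longrightarrow> (\<forall>j<m. b j \<ge> 0)) \<and> ((\<forall>i<n. a i \<le> 0) \<longrightarrow> (\<forall>j<m. b j \<le> 0))"

lemma MaxMin_facts: fixes a :: "nat \<Rightarrow> real" assumes n: "n > 0"
  shows "\<exists>i<n. a i = Max (a ` {..<n})" "\<exists>i<n. a i = Min (a ` {..<n})"
    "\<And>i. i < n \<Longrightarrow> a i \<le> Max (a ` {..<n})" "\<And>i. i < n \<Longrightarrow> Min (a ` {..<n}) \<le> a i"
proof -
  have ne: "a ` {..<n} \<noteq> {}" using n by auto
  have f: "finite (a ` {..<n})" by simp
  from Max_in[OF f ne] show "\<exists>i<n. a i = Max (a ` {..<n})" by auto
  from Min_in[OF f ne] show "\<exists>i<n. a i = Min (a ` {..<n})" by auto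
  fix i assume "i < n"
  then show "a i \<le> Max (a ` {..<n})" "Min (a ` {..<n}) \<le> a i" using f by auto
qed

lemma R1: assumes "nonneg_mat n m D" "row_times n m a D b" shows "C0 n m a b"
  unfolding C0_def
proof (intro conjI impI allI)
  fix j assume pos: "\<forall>i<n. a i \<ge> 0" and j: "j < m"
  have "(\<Sum>i<n. a i * D $$ (i, j)) \<ge> 0" using assms(1) pos j unfolding nonneg_mat_def
    by (intro sum_nonneg) auto
  then show "b j \<ge> 0" using assms(2) j unfolding row_times_def by simp
next
  fix j assume neg: "\<forall>i<n. a i \<le> 0" and j: "j < m"
  have "(\<Sum>i<n. a i * D $$ (i, j)) \<le> 0" using assms(1) neg j unfolding nonneg_mat_def
    by (intro sum_nonpos) (auto simp: mult_nonpos_nonneg)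
  then show "b j \<le> 0" using assms(2) j unfolding row_times_def by simp
qed

lemma R2: fixes a b :: "nat \<Rightarrow> real" assumes n: "n > 0" and c0: "C0 n m a b"
  shows "\<exists>D. nonneg_mat n m D \<and> row_times n m a D b"
proof -
  define M where "M = Max (a ` {..<n})"
  define N where "N = Min (a ` {..<n})"
  obtain imax where imax: "imax < n" "a imax = M" using MaxMin_facts(1)[OF n, of a] M_def by auto
  obtain imin where imin: "imin < n" "a imin = N" using MaxMin_facts(2)[OF n, of a] N_def by auto
  have leM: "i < n \<Longrightarrow> a i \<le> M" for i using MaxMin_facts(3)[OF n] M_def by auto
  have geN: "i < n \<Longrightarrow> N \<le> a i" for i using MaxMin_facts(4)[OF n] N_def by auto
  have bpos: "N \<ge> 0 \<Longrightarrow> j < m \<Longrightarrow> b j \<ge> 0" for j using c0 geN unfolding C0_def by force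
  have bneg: "M \<le> 0 \<Longrightarrow> j < m \<Longrightarrow> b j \<le> 0" for j using c0 leM unfolding C0_def by force
  define D where "D = mat n m (\<lambda>(i,j). (if i = imax then max (b j) 0 / M else 0) + (if i = imin then min (b j) 0 / N else 0))"
  have "nonneg_mat n m D" unfolding nonneg_mat_def
  proof (intro conjI allI impI)
    show "D \<in> carrier_mat n m" unfolding D_def by simp
    fix i j assume i: "i < n" and j: "j < m"
    have 1: "max (b j) 0 / M \<ge> 0"
    proof (cases "M \<ge> 0")
      case True then show ?thesis by simp
    next
      case False then have "max (b j) 0 = 0" using bneg[of j] j by simp
      then show ?thesis by simp
    qed
    have 2: "min (b j) 0 / N \<ge> 0"
    proof (cases "N \<le> 0")
      case True then show ?thesis by (simp add: divide_nonpos_nonpos)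
    next
      case False then have "min (b j) 0 = 0" using bpos[of j] j by simp
      then show ?thesis by simp
    qed
    show "D $$ (i, j) \<ge> 0" unfolding D_def using i j 1 2 by simp
  qed
  moreover have "row_times n m a D b" unfolding row_times_def
  proof (intro allI impI)
    fix j assume j: "j < m"
    have "(\<Sum>i<n. a i * D $$ (i, j)) = (\<Sum>i<n. (if i = imax then a i * (max (b j) 0 / M) else 0)
       + (if i = imin then a i * (min (b j) 0 / N) else 0))"
      unfolding D_def using j by (intro sum.cong refl) (auto simp: distrib_left)
    also have "\<dots> = M * (max (b j) 0 / M) + N * (min (b j) 0 / N)"
      using imax imin by (simp add: sum.distrib)
    also have "M * (max (b j) 0 / M) = max (b j) 0"
      using bneg[of j] j by (cases "M = 0") auto
    also have "N * (min (b j) 0 / N) = min (b j) 0"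
      using bpos[of j] j by (cases "N = 0") auto
    finally show "b j = (\<Sum>i<n. a i * D $$ (i, j))" by simp
  qed
  ultimately show ?thesis by blast
qed

lemma R3: fixes a b :: "nat \<Rightarrow> real" assumes n: "n > 0" and c0: "C0 n m a b"
  shows "\<exists>\<gamma>1 \<gamma>2 :: real. \<gamma>1 \<ge> 0 \<and> \<gamma>2 \<ge> 0 \<and>
                  (\<forall>j<m. \<gamma>2 * Min (a ` {..<n}) \<le> b j \<and> b j \<le> \<gamma>1 * Max (a ` {..<n}))"
proof -
  define M where "M = Max (a ` {..<n})"
  define N where "N = Min (a ` {..<n})"
  have leM: "i < n \<Longrightarrow> a i \<le> M" for i using MaxMin_facts(3)[OF n] M_def by auto
  have geN: "i < n \<Longrightarrow> N \<le> a i" for i using MaxMin_facts(4)[OF n] N_def by auto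
  have bpos: "N \<ge> 0 \<Longrightarrow> j < m \<Longrightarrow> b j \<ge> 0" for j using c0 geN unfolding C0_def by force
  have bneg: "M \<le> 0 \<Longrightarrow> j < m \<Longrightarrow> b j \<le> 0" for j using c0 leM unfolding C0_def by force
  define R where "R = (\<Sum>j<m. \<bar>b j\<bar>)"
  have R: "j < m \<Longrightarrow> \<bar>b j\<bar> \<le> R" for j unfolding R_def
    by (rule member_le_sum) auto
  have R0: "R \<ge> 0" unfolding R_def by (simp add: sum_nonneg)
  define g1 where "g1 = (if M > 0 then R / M else 0)"
  define g2 where "g2 = (if N < 0 then R / (- N) else 0)"
  have "g1 \<ge> 0" "g2 \<ge> 0" unfolding g1_def g2_def using R0 by (auto simp: divide_nonneg_neg)
  moreover have "\<forall>j<m. g2 * N \<le> b j \<and> b j \<le> g1 * M"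
  proof (intro allI impI conjI)
    fix j assume j: "j < m"
    show "g2 * N \<le> b j"
    proof (cases "N < 0")
      case True
      then have "g2 * N = - R" unfolding g2_def by (simp add: field_simps)
      then show ?thesis using R[OF j] by linarith
    next
      case False then show ?thesis using bpos[of j] j unfolding g2_def by simp
    qed
    show "b j \<le> g1 * M"
    proof (cases "M > 0")
      case True
      then have "g1 * M = R" unfolding g1_def by simp
      then show ?thesis using R[OF j] by linarith
    next
      case False then show ?thesis using bneg[of j] j unfolding g1_def by simp
    qed
  qed
  ultimately show ?thesis unfolding M_def N_def by blast
qed

lemma R4: fixes a b :: "nat \<Rightarrow> real" assumes n: "n > 0" and
  g: "\<gamma>1 \<ge> 0" "\<gamma>2 \<ge> 0" "\<forall>j<m. \<gamma>2 * Min (a ` {..<n}) \<le> b j \<and> b j \<le> \<gamma>1 * Max (a ` {..<n})"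
  shows "C0 n m a b"
proof -
  obtain imax where imax: "imax < n" "a imax = Max (a ` {..<n})" using MaxMin_facts(1)[OF n, of a] by auto
  obtain imin where imin: "imin < n" "a imin = Min (a ` {..<n})" using MaxMin_facts(2)[OF n, of a] by auto
  show ?thesis unfolding C0_def
  proof (intro conjI impI allI)
    fix j assume pos: "\<forall>i<n. a i \<ge> 0" and j: "j < m"
    have "Min (a ` {..<n}) \<ge> 0" using pos imin by metis
    then have "\<gamma>2 * Min (a ` {..<n}) \<ge> 0" using g by simp
    then show "b j \<ge> 0" using g(3) j by force
  next
    fix j assume neg: "\<forall>i<n. a i \<le> 0" and j: "j < m"
    have "Max (a ` {..<n}) \<le> 0" using neg imax by metis
    then have "\<gamma>1 * Max (a ` {..<n}) \<le> 0" using g by (simp add: mult_nonneg_nonpos)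
    then show "b j \<le> 0" using g(3) j by force
  qed
qed

lemma R5: fixes a b :: "nat \<Rightarrow> real" assumes n: "n > 0" and D: "column_stochastic n m D" and r: "row_times n m a D b"
  shows "\<forall>j<m. Min (a ` {..<n}) \<le> b j \<and> b j \<le> Max (a ` {..<n})"
proof (intro allI impI conjI)
  fix j assume j: "j < m"
  have nn: "i < n \<Longrightarrow> D $$ (i,j) \<ge> 0" for i using D j unfolding column_stochastic_def nonneg_mat_def by auto
  have cs: "(\<Sum>i<n. D $$ (i, j)) = 1" using D j unfolding column_stochastic_def by auto
  have bj: "b j = (\<Sum>i<n. a i * D $$ (i, j))" using r j unfolding row_times_def by auto
  have "(\<Sum>i<n. a i * D $$ (i, j)) \<le> (\<Sum>i<n. Max (a ` {..<n}) * D $$ (i, j))"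
    using nn MaxMin_facts(3)[OF n] by (intro sum_mono mult_right_mono) auto
  also have "\<dots> = Max (a ` {..<n})" using cs by (simp add: sum_distrib_left[symmetric])
  finally show "b j \<le> Max (a ` {..<n})" using bj by simp
  have "(\<Sum>i<n. Min (a ` {..<n}) * D $$ (i, j)) \<le> (\<Sum>i<n. a i * D $$ (i, j))"
    using nn MaxMin_facts(4)[OF n] by (intro sum_mono mult_right_mono) auto
  moreover have "(\<Sum>i<n. Min (a ` {..<n}) * D $$ (i, j)) = Min (a ` {..<n})"
    using cs by (simp add: sum_distrib_left[symmetric])
  ultimately show "Min (a ` {..<n}) \<le> b j" using bj by simp
qed

lemma R6: fixes a b :: "nat \<Rightarrow> real" assumes n: "n > 0"
  and h: "\<forall>j<m. Min (a ` {..<n}) \<le> b j \<and> b j \<le> Max (a ` {..<n})"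
  shows "\<exists>D. column_stochastic n m D \<and> row_times n m a D b"
proof -
  define M where "M = Max (a ` {..<n})"
  define N where "N = Min (a ` {..<n})"
  obtain imax where imax: "imax < n" "a imax = M" using MaxMin_facts(1)[OF n, of a] M_def by auto
  obtain imin where imin: "imin < n" "a imin = N" using MaxMin_facts(2)[OF n, of a] N_def by auto
  have hb: "j < m \<Longrightarrow> N \<le> b j \<and> b j \<le> M" for j using h M_def N_def by auto
  define th where "th = (\<lambda>j. if M = N then 1 else (b j - N) / (M - N))"
  have th: "j < m \<Longrightarrow> 0 \<le> th j \<and> th j \<le> 1" for j
  proof -
    assume j: "j < m"
    show ?thesis
    proof (cases "M = N")
      case True then show ?thesis unfolding th_def by simp
    next
      case False
      then have "M > N" using hb[OF j] by linarith
      then show ?thesis using hb[OF j] False unfolding th_def by (auto simp: field_simps)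
    qed
  qed
  define D where "D = mat n m (\<lambda>(i,j). (if i = imax then th j else 0) + (if i = imin then 1 - th j else 0))"
  have "column_stochastic n m D" unfolding column_stochastic_def nonneg_mat_def
  proof (intro conjI allI impI)
    show "D \<in> carrier_mat n m" unfolding D_def by simp
    fix i j assume i: "i < n" and j: "j < m"
    show "D $$ (i,j) \<ge> 0" unfolding D_def using i j th[OF j] by simp
  next
    fix j assume j: "j < m"
    have "(\<Sum>i<n. D $$ (i, j)) = (\<Sum>i<n. (if i = imax then th j else 0) + (if i = imin then 1 - th j else 0))"
      unfolding D_def using j by (intro sum.cong refl) auto
    also have "\<dots> = 1" using imax imin by (simp add: sum.distrib)
    finally show "(\<Sum>i<n. D $$ (i, j)) = 1" .
  qed
  moreover have "row_times n m a D b" unfolding row_times_def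
  proof (intro allI impI)
    fix j assume j: "j < m"
    have "(\<Sum>i<n. a i * D $$ (i, j)) = (\<Sum>i<n. (if i = imax then a i * th j else 0)
       + (if i = imin then a i * (1 - th j) else 0))"
      unfolding D_def using j by (intro sum.cong refl) (auto simp: distrib_left)
    also have "\<dots> = M * th j + N * (1 - th j)"
      using imax imin by (simp add: sum.distrib)
    also have "\<dots> = b j"
    proof (cases "M = N")
      case True then show ?thesis using hb[OF j] unfolding th_def by simp
    next
      case False then have MN: "M - N \<noteq> 0" by simp
      have e: "th j * (M - N) = b j - N" unfolding th_def using False MN by simp
      have "M * th j + N * (1 - th j) = N + th j * (M - N)" by (simp add: algebra_simps)
      then show ?thesis using e by simp
    qed
    finally show "b j = (\<Sum>i<n. a i * D $$ (i, j))" by simp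
  qed
  ultimately show ?thesis by blast
qed

lemma cp_pos: assumes cp: "completely_positive n m \<Phi>" and X: "psd_mat n X"
  shows "psd_mat m (\<Phi> X)"
proof -
  have Xc: "X \<in> carrier_mat n n" using X unfolding psd_mat_def by auto
  have lin: "linear_map_mat n m \<Phi>" using cp unfolding completely_positive_def by auto
  have PX: "\<Phi> X \<in> carrier_mat m m" using lin Xc unfolding linear_map_mat_def by auto
  have h: "\<forall>k X. psd_mat (k * n) X \<longrightarrow> psd_mat (k * m) (ampliation k n m \<Phi> X)"
    using cp unfolding completely_positive_def by blast
  have "psd_mat (1 * m) (ampliation 1 n m \<Phi> X)" using h X by (metis mult_1)
  moreover have "ampliation 1 n m \<Phi> X = \<Phi> X"
  proof (rule eq_matI)
    fix i j assume "i < dim_row (\<Phi> X)" "j < dim_col (\<Phi> X)"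
    then have i: "i < m" and j: "j < m" using PX by auto
    have "mat n n (\<lambda>(r, s). X $$ ((i div m) * n + r, (j div m) * n + s)) = X"
      using i j Xc by (intro eq_matI) auto
    then show "ampliation 1 n m \<Phi> X $$ (i, j) = \<Phi> X $$ (i, j)"
      unfolding ampliation_def using i j by simp
  qed (use PX in \<open>auto simp: ampliation_def\<close>)
  ultimately show ?thesis by (metis mult_1)
qed

lemma lin_comb: assumes lin: "linear_map_mat n m \<Phi>" and A: "A \<in> carrier_mat n n"
  shows "\<Phi> (s \<cdot>\<^sub>m A + t \<cdot>\<^sub>m 1\<^sub>m n) = s \<cdot>\<^sub>m \<Phi> A + t \<cdot>\<^sub>m \<Phi> (1\<^sub>m n)"
proof -
  have sA: "s \<cdot>\<^sub>m A \<in> carrier_mat n n" using A by simp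
  have t1: "t \<cdot>\<^sub>m 1\<^sub>m n \<in> carrier_mat n n" by simp
  have "\<Phi> (s \<cdot>\<^sub>m A + t \<cdot>\<^sub>m 1\<^sub>m n) = \<Phi> (s \<cdot>\<^sub>m A) + \<Phi> (t \<cdot>\<^sub>m 1\<^sub>m n)"
    using lin sA t1 unfolding linear_map_mat_def by blast
  also have "\<Phi> (s \<cdot>\<^sub>m A) = s \<cdot>\<^sub>m \<Phi> A" using lin A unfolding linear_map_mat_def by blast
  also have "\<Phi> (t \<cdot>\<^sub>m 1\<^sub>m n) = t \<cdot>\<^sub>m \<Phi> (1\<^sub>m n)" using lin one_carrier_mat unfolding linear_map_mat_def by blast
  finally show ?thesis .
qed

lemma L_pos: assumes cp: "completely_positive n m \<Phi>" and PhiA: "\<Phi> A = B"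
  and hA: "hermitian_mat n A" and hB: "hermitian_mat m B"
  and evA: "eigenvalues_are n A a" and evB: "eigenvalues_are m B b"
  and st: "\<forall>i<n. s * a i + t \<ge> 0" and tc: "t = 0 \<or> \<Phi> (1\<^sub>m n) = 1\<^sub>m m" and j: "j < m"
  shows "s * b j + t \<ge> 0"
proof -
  have A: "A \<in> carrier_mat n n" using hA hermitian_adj by auto
  have B: "B \<in> carrier_mat m m" using hB hermitian_adj by auto
  have lin: "linear_map_mat n m \<Phi>" using cp unfolding completely_positive_def by auto
  have P1: "\<Phi> (1\<^sub>m n) \<in> carrier_mat m m" using lin unfolding linear_map_mat_def by auto
  have "psd_mat m (\<Phi> (complex_of_real s \<cdot>\<^sub>m A + complex_of_real t \<cdot>\<^sub>m 1\<^sub>m n))"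
    using cp_pos[OF cp psd_comb[OF hA evA st]] .
  also have "\<Phi> (complex_of_real s \<cdot>\<^sub>m A + complex_of_real t \<cdot>\<^sub>m 1\<^sub>m n)
    = complex_of_real s \<cdot>\<^sub>m B + complex_of_real t \<cdot>\<^sub>m \<Phi> (1\<^sub>m n)" using lin_comb[OF lin A] PhiA by simp
  also have "complex_of_real t \<cdot>\<^sub>m \<Phi> (1\<^sub>m n) = complex_of_real t \<cdot>\<^sub>m 1\<^sub>m m"
  proof (cases "t = 0")
    case True then show ?thesis using P1 by (intro eq_matI) auto
  next
    case False then show ?thesis using tc by simp
  qed
  finally show ?thesis using psd_eig[OF B evB j] by blast
qed

lemma triple_diag: assumes V: "V \<in> carrier_mat m m" and Dg: "Dg \<in> carrier_mat m m" and d: "diagonal_mat Dg"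
  and r: "r < m" and s: "s < m"
  shows "(V * Dg * adj V) $$ (r,s) = (\<Sum>l<m. Dg $$ (l,l) * V $$ (r,l) * cnj (V $$ (s,l)))"
proof -
  have VD: "V * Dg \<in> carrier_mat m m" using mult_carrier_mat[OF V Dg] .
  have "(V * Dg * adj V) $$ (r,s) = (\<Sum>l<m. (V * Dg) $$ (r,l) * adj V $$ (l,s))"
    using mult_index_sum[OF VD adj_carrier[OF V] r s] .
  also have "\<dots> = (\<Sum>l<m. Dg $$ (l,l) * V $$ (r,l) * cnj (V $$ (s,l)))"
  proof (intro sum.cong refl)
    fix l assume l: "l \<in> {..<m}"
    have "(V * Dg) $$ (r,l) = (\<Sum>t<m. V $$ (r,t) * Dg $$ (t,l))" using mult_index_sum[OF V Dg r] l by simp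
    also have "\<dots> = (\<Sum>t<m. if t = l then V $$ (r,l) * Dg $$ (l,l) else 0)"
      using d Dg l unfolding diagonal_mat_def by (intro sum.cong refl) auto
    also have "\<dots> = V $$ (r,l) * Dg $$ (l,l)" using l by simp
    finally show "(V * Dg) $$ (r,l) * adj V $$ (l,s) = Dg $$ (l,l) * V $$ (r,l) * cnj (V $$ (s,l))"
      using V l s by simp
  qed
  finally show ?thesis .
qed

lemma unit_eigvecs: assumes A: "A \<in> carrier_mat n n" and ev: "eigenvalues_are n A a"
  shows "\<exists>xv. \<forall>i<n. xv i \<in> carrier_vec n \<and> xv i \<bullet>c xv i = 1 \<and> A *\<^sub>v xv i = complex_of_real (a i) \<cdot>\<^sub>v xv i"
proof -
  have "\<forall>i. \<exists>x. i < n \<longrightarrow> x \<in> carrier_vec n \<and> x \<bullet>c x = 1 \<and> A *\<^sub>v x = complex_of_real (a i) \<cdot>\<^sub>v x"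
  proof
    fix i
    show "\<exists>x. i < n \<longrightarrow> x \<in> carrier_vec n \<and> x \<bullet>c x = 1 \<and> A *\<^sub>v x = complex_of_real (a i) \<cdot>\<^sub>v x"
    proof (cases "i < n")
      case True
      from find_eigenvector[OF A eig_of[OF A ev True]] obtain v0
        where "eigenvector A v0 (complex_of_real (a i))" by blast
      then have v0: "v0 \<in> carrier_vec n" "v0 \<noteq> 0\<^sub>v n" and Av0: "A *\<^sub>v v0 = complex_of_real (a i) \<cdot>\<^sub>v v0"
        unfolding eigenvector_def using A by auto
      from normalize_vec[OF v0] obtain c where c: "(c \<cdot>\<^sub>v v0) \<bullet>c (c \<cdot>\<^sub>v v0) = 1" by blast
      have "A *\<^sub>v (c \<cdot>\<^sub>v v0) = complex_of_real (a i) \<cdot>\<^sub>v (c \<cdot>\<^sub>v v0)" using A v0 Av0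
        by (simp add: mult_mat_vec smult_smult_assoc mult.commute)
      then show ?thesis using c v0 by (intro exI[of _ "c \<cdot>\<^sub>v v0"]) simp
    qed simp
  qed
  from choice[OF this] show ?thesis by blast
qed

lemma construct:
  assumes hA: "hermitian_mat n A" and hB: "hermitian_mat m B"
    and evA: "eigenvalues_are n A a" and evB: "eigenvalues_are m B b"
    and D: "nonneg_mat n m D" and rt: "row_times n m a D b"
  shows "\<exists>\<Phi>. completely_positive n m \<Phi> \<and> \<Phi> A = B \<and> ((\<forall>j<m. (\<Sum>i<n. D $$ (i,j)) = 1) \<longrightarrow> unital n m \<Phi>)"
proof -
  have A: "A \<in> carrier_mat n n" using hA hermitian_adj by auto
  have Bc: "B \<in> carrier_mat m m" using hB hermitian_adj by auto
  from unit_eigvecs[OF A evA] obtain xv where xv: "\<And>i. i < n \<Longrightarrow> xv i \<in> carrier_vec n \<and> xv i \<bullet>c xv i = 1 \<and>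
    A *\<^sub>v xv i = complex_of_real (a i) \<cdot>\<^sub>v xv i" by blast
  have one: "conjugate (xv i) \<bullet> xv i = 1" if i: "i < n" for i
    using xv[OF i] comm_scalar_prod[of "xv i" n "conjugate (xv i)"] by simp
  have qfA: "qf n A (xv i) = complex_of_real (a i)" if i: "i < n" for i
    using qf_alt[OF A, of "xv i"] xv[OF i] one[OF i] by simp
  have qf1: "qf n (1\<^sub>m n) (xv i) = 1" if i: "i < n" for i
    using qf_alt[OF one_carrier_mat, of "xv i"] xv[OF i] one[OF i] by simp
  from spectral[OF hB] obtain V Dg where uV: "unitary m V" and Dg: "Dg \<in> carrier_mat m m"
    and dDg: "diagonal_mat Dg" and BV: "B = V * Dg * adj V" by blast
  have V: "V \<in> carrier_mat m m" using uV unfolding unitary_def by auto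
  have "\<forall>l. \<exists>j. l < m \<longrightarrow> j < m \<and> Dg $$ (l,l) = complex_of_real (b j)"
    using eig_root[OF Bc evB spectral_eig[OF Bc uV Dg dDg BV]] by blast
  from choice[OF this] obtain sg where sg: "\<And>l. l < m \<Longrightarrow> sg l < m \<and> Dg $$ (l,l) = complex_of_real (b (sg l))"
    by blast
  define T where "T = {..<n} \<times> {..<m}"
  define c where "c = (\<lambda>(i,l). D $$ (i, sg l))"
  define x where "x = (\<lambda>(i::nat,l::nat). xv i)"
  define g where "g = (\<lambda>(i::nat,l) r. V $$ (r,l))"
  define \<Phi> where "\<Phi> = cpmap n m T c x g"
  have cnn: "\<forall>t\<in>T. c t \<ge> 0" unfolding T_def c_def using D sg unfolding nonneg_mat_def by auto
  have cp: "completely_positive n m \<Phi>" unfolding \<Phi>_def by (rule cpmap_cp) (auto simp: T_def cnn)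
  have Phi_entry: "\<Phi> X $$ (r,s) = (\<Sum>l<m. (\<Sum>i<n. complex_of_real (D $$ (i, sg l)) * qf n X (xv i)) * V $$ (r,l) * cnj (V $$ (s,l)))"
    if r: "r < m" and s: "s < m" for X r s
  proof -
    have "\<Phi> X $$ (r,s) = (\<Sum>i<n. \<Sum>l<m. complex_of_real (D $$ (i, sg l)) * (qf n X (xv i) * V $$ (r,l) * cnj (V $$ (s,l))))"
    proof -
      have "\<Phi> X $$ (r,s) = (\<Sum>(i,l)\<in>{..<n} \<times> {..<m}. complex_of_real (D $$ (i, sg l)) * (qf n X (xv i) * V $$ (r,l) * cnj (V $$ (s,l))))"
        unfolding \<Phi>_def using r s by (simp add: cpmap_index T_def c_def x_def g_def split_beta)
      then show ?thesis by (simp add: sum.cartesian_product)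
    qed
    also have "\<dots> = (\<Sum>l<m. \<Sum>i<n. complex_of_real (D $$ (i, sg l)) * (qf n X (xv i) * V $$ (r,l) * cnj (V $$ (s,l))))"
      by (rule sum.swap)
    also have "\<dots> = (\<Sum>l<m. (\<Sum>i<n. complex_of_real (D $$ (i, sg l)) * qf n X (xv i)) * V $$ (r,l) * cnj (V $$ (s,l)))"
      by (simp add: sum_distrib_right mult.assoc)
    finally show ?thesis .
  qed
  have "\<Phi> A = B"
  proof (rule eq_matI)
    have PA: "\<Phi> A \<in> carrier_mat m m" unfolding \<Phi>_def by (simp add: cpmap_def)
    fix r s assume "r < dim_row B" "s < dim_col B"
    then have r: "r < m" and s: "s < m" using Bc by auto
    have "\<Phi> A $$ (r,s) = (\<Sum>l<m. (\<Sum>i<n. complex_of_real (D $$ (i, sg l)) * qf n A (xv i)) * V $$ (r,l) * cnj (V $$ (s,l)))"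
      using Phi_entry[OF r s] .
    also have "\<dots> = (\<Sum>l<m. Dg $$ (l,l) * V $$ (r,l) * cnj (V $$ (s,l)))"
    proof (intro sum.cong refl)
      fix l assume l: "l \<in> {..<m}"
      have "(\<Sum>i<n. complex_of_real (D $$ (i, sg l)) * qf n A (xv i)) = complex_of_real (\<Sum>i<n. a i * D $$ (i, sg l))"
        by (simp add: qfA mult.commute)
      also have "\<dots> = complex_of_real (b (sg l))" using rt sg[of l] l unfolding row_times_def by simp
      also have "\<dots> = Dg $$ (l,l)" using sg[of l] l by simp
      finally show "(\<Sum>i<n. complex_of_real (D $$ (i, sg l)) * qf n A (xv i)) * V $$ (r,l) * cnj (V $$ (s,l))
        = Dg $$ (l,l) * V $$ (r,l) * cnj (V $$ (s,l))" by simp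
    qed
    also have "\<dots> = B $$ (r,s)" unfolding BV using triple_diag[OF V Dg dDg r s] by simp
    finally show "\<Phi> A $$ (r,s) = B $$ (r,s)" .
  qed (use Bc in \<open>auto simp: \<Phi>_def cpmap_def\<close>)
  moreover have "unital n m \<Phi>" if cs: "\<forall>j<m. (\<Sum>i<n. D $$ (i,j)) = 1"
    unfolding unital_def
  proof (rule eq_matI)
    fix r s assume "r < dim_row (1\<^sub>m m)" "s < dim_col (1\<^sub>m m)"
    then have r: "r < m" and s: "s < m" by auto
    have "\<Phi> (1\<^sub>m n) $$ (r,s) = (\<Sum>l<m. (\<Sum>i<n. complex_of_real (D $$ (i, sg l)) * qf n (1\<^sub>m n) (xv i)) * V $$ (r,l) * cnj (V $$ (s,l)))"
      using Phi_entry[OF r s] .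
    also have "\<dots> = (\<Sum>l<m. (1\<^sub>m m) $$ (l,l) * V $$ (r,l) * cnj (V $$ (s,l)))"
    proof (intro sum.cong refl)
      fix l assume l: "l \<in> {..<m}"
      have "(\<Sum>i<n. complex_of_real (D $$ (i, sg l)) * qf n (1\<^sub>m n) (xv i)) = complex_of_real (\<Sum>i<n. D $$ (i, sg l))"
        by (simp add: qf1)
      also have "\<dots> = 1" using cs sg[of l] l by simp
      finally show "(\<Sum>i<n. complex_of_real (D $$ (i, sg l)) * qf n (1\<^sub>m n) (xv i)) * V $$ (r,l) * cnj (V $$ (s,l))
        = (1\<^sub>m m) $$ (l,l) * V $$ (r,l) * cnj (V $$ (s,l))" using l by simp
    qed
    also have "\<dots> = (V * 1\<^sub>m m * adj V) $$ (r,s)"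
      using triple_diag[OF V one_carrier_mat _ r s] by (simp add: diagonal_mat_def)
    also have "\<dots> = 1\<^sub>m m $$ (r,s)" using unitary_right[OF uV] V by simp
    finally show "\<Phi> (1\<^sub>m n) $$ (r,s) = 1\<^sub>m m $$ (r,s)" .
  qed (auto simp: \<Phi>_def cpmap_def)
  ultimately show ?thesis using cp by blast
qed

theorem theorem3p1:
  fixes n m :: nat and A B :: "complex mat" and a b :: "nat \<Rightarrow> real"
  assumes "n > 0" and "m > 0"
    and "hermitian_mat n A" and "hermitian_mat m B"
    and "eigenvalues_are n A a" and "eigenvalues_are m B b"
  shows "((\<exists>\<Phi>. completely_positive n m \<Phi> \<and> \<Phi> A = B)
            \<longleftrightarrow> (\<exists>D. nonneg_mat n m D \<and> row_times n m a D b))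
       \<and> ((\<exists>D. nonneg_mat n m D \<and> row_times n m a D b)
            \<longleftrightarrow> (\<exists>\<gamma>1 \<gamma>2 :: real. \<gamma>1 \<ge> 0 \<and> \<gamma>2 \<ge> 0 \<and>
                  (\<forall>j<m. \<gamma>2 * Min (a ` {..<n}) \<le> b j \<and> b j \<le> \<gamma>1 * Max (a ` {..<n}))))
       \<and> ((\<exists>\<Phi>. completely_positive n m \<Phi> \<and> unital n m \<Phi> \<and> \<Phi> A = B)
            \<longleftrightarrow> (\<exists>D. column_stochastic n m D \<and> row_times n m a D b))
       \<and> ((\<exists>D. column_stochastic n m D \<and> row_times n m a D b)
            \<longleftrightarrow> (\<forall>j<m. Min (a ` {..<n}) \<le> b j \<and> b j \<le> Max (a ` {..<n})))"
proof -
  note n = assms(1) and hA = assms(3) and hB = assms(4) and evA = assms(5) and evB = assms(6)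
  have P1C0: "C0 n m a b" if "\<exists>\<Phi>. completely_positive n m \<Phi> \<and> \<Phi> A = B"
  proof -
    from that obtain \<Phi> where cp: "completely_positive n m \<Phi>" and PA: "\<Phi> A = B" by blast
    show ?thesis unfolding C0_def
    proof (intro conjI impI allI)
      fix j assume pos: "\<forall>i<n. a i \<ge> 0" and j: "j < m"
      have "1 * b j + 0 \<ge> 0" using L_pos[OF cp PA hA hB evA evB _ _ j, of 1 0] pos by simp
      then show "b j \<ge> 0" by simp
    next
      fix j assume neg: "\<forall>i<n. a i \<le> 0" and j: "j < m"
      have "(-1) * b j + 0 \<ge> 0" using L_pos[OF cp PA hA hB evA evB _ _ j, of "-1" 0] neg by simp
      then show "b j \<le> 0" by simp
    qed
  qed
  have P4P6: "\<forall>j<m. Min (a ` {..<n}) \<le> b j \<and> b j \<le> Max (a ` {..<n})"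
    if "\<exists>\<Phi>. completely_positive n m \<Phi> \<and> unital n m \<Phi> \<and> \<Phi> A = B"
  proof (intro allI impI conjI)
    from that obtain \<Phi> where cp: "completely_positive n m \<Phi>" and u: "unital n m \<Phi>" and PA: "\<Phi> A = B" by blast
    have u': "\<Phi> (1\<^sub>m n) = 1\<^sub>m m" using u unfolding unital_def .
    fix j assume j: "j < m"
    have "1 * b j + (- Min (a ` {..<n})) \<ge> 0"
      using L_pos[OF cp PA hA hB evA evB _ _ j, of 1 "- Min (a ` {..<n})"] u' MaxMin_facts(4)[OF n] by simp
    then show "Min (a ` {..<n}) \<le> b j" by simp
    have "(-1) * b j + Max (a ` {..<n}) \<ge> 0"
      using L_pos[OF cp PA hA hB evA evB _ _ j, of "-1" "Max (a ` {..<n})"] u' MaxMin_facts(3)[OF n] by simp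
    then show "b j \<le> Max (a ` {..<n})" by simp
  qed
  have P2P1: "\<exists>\<Phi>. completely_positive n m \<Phi> \<and> \<Phi> A = B" if "\<exists>D. nonneg_mat n m D \<and> row_times n m a D b"
    using that construct[OF hA hB evA evB] by blast
  have P5P4: "\<exists>\<Phi>. completely_positive n m \<Phi> \<and> unital n m \<Phi> \<and> \<Phi> A = B"
    if "\<exists>D. column_stochastic n m D \<and> row_times n m a D b"
  proof -
    from that obtain D where D: "column_stochastic n m D" and r: "row_times n m a D b" by blast
    from construct[OF hA hB evA evB _ r] D show ?thesis unfolding column_stochastic_def by blast
  qed
  show ?thesis
  proof (intro conjI iffI)
    assume "\<exists>\<Phi>. completely_positive n m \<Phi> \<and> \<Phi> A = B"
    then show "\<exists>D. nonneg_mat n m D \<and> row_times n m a D b" using P1C0 R2[OF n] by blast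
  next
    assume "\<exists>D. nonneg_mat n m D \<and> row_times n m a D b"
    then show "\<exists>\<Phi>. completely_positive n m \<Phi> \<and> \<Phi> A = B" using P2P1 by blast
  next
    assume "\<exists>D. nonneg_mat n m D \<and> row_times n m a D b"
    then have "C0 n m a b" using R1 by blast
    then show "\<exists>\<gamma>1 \<gamma>2 :: real. \<gamma>1 \<ge> 0 \<and> \<gamma>2 \<ge> 0 \<and>
                  (\<forall>j<m. \<gamma>2 * Min (a ` {..<n}) \<le> b j \<and> b j \<le> \<gamma>1 * Max (a ` {..<n}))"
      using R3[OF n] by blast
  next
    assume "\<exists>\<gamma>1 \<gamma>2 :: real. \<gamma>1 \<ge> 0 \<and> \<gamma>2 \<ge> 0 \<and>
                  (\<forall>j<m. \<gamma>2 * Min (a ` {..<n}) \<le> b j \<and> b j \<le> \<gamma>1 * Max (a ` {..<n}))"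
    then have "C0 n m a b" using R4[OF n] by blast
    then show "\<exists>D. nonneg_mat n m D \<and> row_times n m a D b" using R2[OF n] by blast
  next
    assume "\<exists>\<Phi>. completely_positive n m \<Phi> \<and> unital n m \<Phi> \<and> \<Phi> A = B"
    then show "\<exists>D. column_stochastic n m D \<and> row_times n m a D b" using P4P6 R6[OF n] by blast
  next
    assume "\<exists>D. column_stochastic n m D \<and> row_times n m a D b"
    then show "\<exists>\<Phi>. completely_positive n m \<Phi> \<and> unital n m \<Phi> \<and> \<Phi> A = B" using P5P4 by blast
  next
    assume "\<exists>D. column_stochastic n m D \<and> row_times n m a D b"
    then show "\<forall>j<m. Min (a ` {..<n}) \<le> b j \<and> b j \<le> Max (a ` {..<n})" using R5[OF n] by blast
  next
    assume "\<forall>j<m. Min (a ` {..<n}) \<le> b j \<and> b j \<le> Max (a ` {..<n})"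
    then show "\<exists>D. column_stochastic n m D \<and> row_times n m a D b" using R6[OF n] by blast
  qed
qed

end
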